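(* Fix $\gamma \geq 1$ and $0 \leq \rho < 1$. Let $A(u,v) = (u,u+v)$, $\mathbf{1} = (1,1)$, $\mathbf{c} = (\gamma,1)$, and let $T,M:\mathbb{R}^2\to\mathbb{R}^2$ be defined by $$T\mathbf{x} = \begin{cases} A\mathbf{x} + \mathbf{1}, & \langle \mathbf{c},\mathbf{x}\rangle \leq -1/2,\\ A\mathbf{x}, & |\langle \mathbf{c},\mathbf{x}\rangle| < 1/2,\\ A\mathbf{x} - \mathbf{1}, & \langle \mathbf{c},\mathbf{x}\rangle \geq 1/2,\end{cases}\qquad M(u,v) = \begin{cases} T(\rho u,\rho v), & u \geq 0,\\ T(u,v), & u<0.\end{cases}$$ Let $S = S^+\cup S^-$ where $S^+ = \{(u,v) : -1/2 \leq \gamma u + v \leq 1/2 + \gamma,\ 0 \leq u < 1\}$ and $S^- = \{(u,v) : -(1/2+\gamma) \leq \gamma u + v \leq 1/2,\ -1 \leq u < 0\}$. Suppose $(u_0,v_0) \in S$ and let $(u_n,v_n) = M^n(u_0,v_0)$. Let $\mathcal{I}^+ = \{n \geq 0 : u_n \geq 0\}$. Then the subsequence $(u_n)_{n\in\mathcal{I}^+}$ converges to zero as $n\to\infty$.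
   Context: $\langle\cdot,\cdot\rangle$ is the standard inner product on $\mathbb{R}^2$. *)

theory Defs
  imports "HOL-Analysis.Analysis"
begin

definition Amap :: "real \<times> real \<Rightarrow> real \<times> real" where
  "Amap x = (fst x, fst x + snd x)"

definition one2 :: "real \<times> real" where
  "one2 = (1, 1)"

definition cvec :: "real \<Rightarrow> real \<times> real" where
  "cvec \<gamma> = (\<gamma>, 1)"

definition Tmap :: "real \<Rightarrow> real \<times> real \<Rightarrow> real \<times> real" where
  "Tmap \<gamma> x =
     (if cvec \<gamma> \<bullet> x \<le> -1/2 then Amap x + one2
      else if \<bar>cvec \<gamma> \<bullet> x\<bar> < 1/2 then Amap x
      else Amap x - one2)"

definition Mmap :: "real \<Rightarrow> real \<Rightarrow> real \<times> real \<Rightarrow> real \<times> real" where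
  "Mmap \<gamma> \<rho> x =
     (if fst x \<ge> 0 then Tmap \<gamma> (\<rho> *\<^sub>R x) else Tmap \<gamma> x)"

definition Splus :: "real \<Rightarrow> (real \<times> real) set" where
  "Splus \<gamma> = {(u, v). -1/2 \<le> \<gamma> * u + v \<and> \<gamma> * u + v \<le> 1/2 + \<gamma> \<and> 0 \<le> u \<and> u < 1}"

definition Sminus :: "real \<Rightarrow> (real \<times> real) set" where
  "Sminus \<gamma> = {(u, v). -(1/2 + \<gamma>) \<le> \<gamma> * u + v \<and> \<gamma> * u + v \<le> 1/2 \<and> -1 \<le> u \<and> u < 0}"

definition Sset :: "real \<Rightarrow> (real \<times> real) set" where
  "Sset \<gamma> = Splus \<gamma> \<union> Sminus \<gamma>"

end

theory Submission
  imports Defs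
begin

definition Gset :: "real \<Rightarrow> (real \<times> real) set" where
  "Gset \<gamma> = {(u, v). (0 \<le> u \<and> u < 1 \<and> -1/2 \<le> \<gamma> * u + v \<and> \<gamma> * u + v \<le> 1/2 + \<gamma>)
     \<or> (-1 \<le> u \<and> u < 0 \<and> -(1/2 + \<gamma>) \<le> \<gamma> * u + v \<and> \<gamma> * u + v < 1/2)}"

lemma memG: "\<gamma> * a + b = w \<Longrightarrow> (0 \<le> a \<and> a < 1 \<and> -1/2 \<le> w \<and> w \<le> 1/2 + \<gamma>)
     \<or> (-1 \<le> a \<and> a < 0 \<and> -(1/2 + \<gamma>) \<le> w \<and> w < 1/2) \<Longrightarrow> (a, b) \<in> Gset \<gamma>"
  unfolding Gset_def by auto

lemma memG_D: "(a, b) \<in> Gset \<gamma> \<Longrightarrow> (0 \<le> a \<and> a < 1 \<and> -1/2 \<le> \<gamma> * a + b \<and> \<gamma> * a + b \<le> 1/2 + \<gamma>)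
     \<or> (-1 \<le> a \<and> a < 0 \<and> -(1/2 + \<gamma>) \<le> \<gamma> * a + b \<and> \<gamma> * a + b < 1/2)"
  unfolding Gset_def by auto

lemma Tm1: "\<gamma> * s + t \<le> -1/2 \<Longrightarrow> Tmap \<gamma> (s,t) = (s+1, s+t+1) \<and> \<gamma> * (s+1) + (s+t+1) = (\<gamma> * s + t) + s + \<gamma> + 1"
  by (simp add: Tmap_def Amap_def one2_def cvec_def algebra_simps)

lemma T0: "-1/2 < \<gamma> * s + t \<Longrightarrow> \<gamma> * s + t < 1/2 \<Longrightarrow> Tmap \<gamma> (s,t) = (s, s+t) \<and> \<gamma> * s + (s+t) = (\<gamma> * s + t) + s"
proof -
  assume a: "-1/2 < \<gamma> * s + t" "\<gamma> * s + t < 1/2"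
  then have "\<not> (\<gamma> * s + t \<le> -1/2)" "\<bar>\<gamma> * s + t\<bar> < 1/2" by arith+
  then show ?thesis by (simp add: Tmap_def Amap_def one2_def cvec_def)
qed

lemma Tp1: "\<gamma> * s + t \<ge> 1/2 \<Longrightarrow> Tmap \<gamma> (s,t) = (s-1, s+t-1) \<and> \<gamma> * (s-1) + (s+t-1) = (\<gamma> * s + t) + s - \<gamma> - 1"
  by (simp add: Tmap_def Amap_def one2_def cvec_def algebra_simps abs_less_iff)

lemma Mmap_pos: "u \<ge> 0 \<Longrightarrow> Mmap \<gamma> \<rho> (u,v) = Tmap \<gamma> (\<rho> * u, \<rho> * v)"
  by (simp add: Mmap_def)

lemma Mmap_neg: "u < 0 \<Longrightarrow> Mmap \<gamma> \<rho> (u,v) = Tmap \<gamma> (u, v)"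
  by (simp add: Mmap_def)

lemma G_inv:
  assumes g: "\<gamma> \<ge> 1" and r: "0 \<le> \<rho>" "\<rho> < 1" and x: "(u,v) \<in> Gset \<gamma>"
  shows "Mmap \<gamma> \<rho> (u,v) \<in> Gset \<gamma>"
proof (cases "u \<ge> 0")
  case True
  define W where "W = \<gamma> * u + v"
  have u: "0 \<le> u" "u < 1" "-1/2 \<le> W" "W \<le> 1/2 + \<gamma>" using memG_D[OF x] True unfolding W_def by auto
  have e: "\<gamma> * (\<rho> * u) + \<rho> * v = \<rho> * W" unfolding W_def by algebra
  have a1: "\<rho> * W \<ge> \<rho> * (-1/2)" using u r mult_left_mono by blast
  have a2: "\<rho> * W \<le> \<rho> * (1/2+\<gamma>)" using u r mult_left_mono by blast
  have a3: "\<rho> * \<gamma> \<le> \<gamma>" using r g by (simp add: mult_left_le_one_le)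
  have a4: "\<rho> * u \<le> u" "0 \<le> \<rho> * u" using r u by (simp_all add: mult_left_le_one_le)
  have M: "Mmap \<gamma> \<rho> (u,v) = Tmap \<gamma> (\<rho> * u, \<rho> * v)" using True by (rule Mmap_pos)
  show ?thesis
  proof (cases "\<rho> * W < 1/2")
    case True
    have "-1/2 < \<rho> * W" using a1 r by linarith
    with True e T0[of \<gamma> "\<rho> * u" "\<rho> * v"] have
      "Mmap \<gamma> \<rho> (u,v) = (\<rho> * u, \<rho> * u + \<rho> * v)"
      "\<gamma> * (\<rho> * u) + (\<rho> * u + \<rho> * v) = \<rho> * W + \<rho> * u" using M by auto
    moreover have "0 \<le> \<rho> * u \<and> \<rho> * u < 1 \<and> -1/2 \<le> \<rho> * W + \<rho> * u \<and> \<rho> * W + \<rho> * u \<le> 1/2 + \<gamma>"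
      using a4 u g True \<open>-1/2 < \<rho> * W\<close> by linarith
    ultimately show ?thesis using memG by metis
  next
    case False
    with e Tp1[of \<gamma> "\<rho> * u" "\<rho> * v"] have
      "Mmap \<gamma> \<rho> (u,v) = (\<rho> * u - 1, \<rho> * u + \<rho> * v - 1)"
      "\<gamma> * (\<rho> * u - 1) + (\<rho> * u + \<rho> * v - 1) = \<rho> * W + \<rho> * u - \<gamma> - 1" using M by auto
    moreover have "-1 \<le> \<rho> * u - 1 \<and> \<rho> * u - 1 < 0 \<and> -(1/2 + \<gamma>) \<le> \<rho> * W + \<rho> * u - \<gamma> - 1 \<and> \<rho> * W + \<rho> * u - \<gamma> - 1 < 1/2"
      using False a1 a2 a3 a4 u r g distrib_left[of \<rho> "1/2" \<gamma>] by linarith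
    ultimately show ?thesis using memG by metis
  qed
next
  case False
  define W where "W = \<gamma> * u + v"
  have u: "-1 \<le> u" "u < 0" "-(1/2 + \<gamma>) \<le> W" "W < 1/2" using memG_D[OF x] False unfolding W_def by auto
  have M: "Mmap \<gamma> \<rho> (u,v) = Tmap \<gamma> (u, v)" using False by (simp add: Mmap_neg)
  show ?thesis
  proof (cases "W \<le> -1/2")
    case True
    with Tm1[of \<gamma> u v] M have "Mmap \<gamma> \<rho> (u,v) = (u+1, u+v+1)" "\<gamma> * (u+1) + (u+v+1) = W + u + \<gamma> + 1"
      unfolding W_def by auto
    moreover have "0 \<le> u+1 \<and> u+1 < 1 \<and> -1/2 \<le> W + u + \<gamma> + 1 \<and> W + u + \<gamma> + 1 \<le> 1/2 + \<gamma>"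
      using u True by linarith
    ultimately show ?thesis using memG by metis
  next
    case False
    with T0[of \<gamma> u v] M u have "Mmap \<gamma> \<rho> (u,v) = (u, u+v)" "\<gamma> * u + (u+v) = W + u"
      unfolding W_def by auto
    moreover have "-1 \<le> u \<and> u < 0 \<and> -(1/2 + \<gamma>) \<le> W + u \<and> W + u < 1/2"
      using u g False by linarith
    ultimately show ?thesis using memG by metis
  qed
qed

lemma Tmap_fst: "fst (Tmap \<gamma> (s,t)) = s+1 \<or> fst (Tmap \<gamma> (s,t)) = s \<or> fst (Tmap \<gamma> (s,t)) = s - 1"
  by (simp add: Tmap_def Amap_def one2_def)

definition rr :: "real \<times> real \<Rightarrow> real" where
  "rr x = (if fst x \<ge> 0 then fst x else fst x + 1)"

lemma rr_step:
  assumes g: "\<gamma> \<ge> 1" and r: "0 \<le> \<rho>" "\<rho> < 1" and x: "(u,v) \<in> Gset \<gamma>"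
  shows "rr (Mmap \<gamma> \<rho> (u,v)) = (if u \<ge> 0 then \<rho> * rr (u,v) else rr (u,v))"
proof -
  have G: "Mmap \<gamma> \<rho> (u,v) \<in> Gset \<gamma>" using G_inv[OF g r x] .
  obtain a b where ab: "Mmap \<gamma> \<rho> (u,v) = (a,b)" by force
  have ar: "-1 \<le> a \<and> a < 1" using memG_D[OF G[unfolded ab]] by auto
  have ux: "-1 \<le> u \<and> u < 1" using memG_D[OF x] by auto
  show ?thesis
  proof (cases "u \<ge> 0")
    case True
    have h: "a = \<rho> * u + 1 \<or> a = \<rho> * u \<or> a = \<rho> * u - 1"
      using Tmap_fst[of \<gamma> "\<rho> * u" "\<rho> * v"] ab True by (simp add: Mmap_pos)
    have "0 \<le> \<rho> * u" "\<rho> * u < 1" using True r ux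
      by (simp, smt (verit) mult_left_le_one_le)
    then show ?thesis using h ab ar True unfolding rr_def by auto
  next
    case False
    have h: "a = u + 1 \<or> a = u \<or> a = u - 1"
      using Tmap_fst[of \<gamma> u v] ab False by (simp add: Mmap_neg)
    then show ?thesis using ab ar ux False unfolding rr_def by auto
  qed
qed

lemma conv_from_G:
  fixes x :: "nat \<Rightarrow> real \<times> real"
  assumes g: "\<gamma> \<ge> 1" and r: "0 \<le> \<rho>" "\<rho> < 1"
    and xs: "\<And>n. x (Suc n) = Mmap \<gamma> \<rho> (x n)" and x0: "x Nz \<in> Gset \<gamma>"
  shows "\<forall>\<epsilon>>0. \<exists>N. \<forall>n\<ge>N. fst (x n) \<ge> 0 \<longrightarrow> \<bar>fst (x n)\<bar> < \<epsilon>"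
proof -
  have G: "x n \<in> Gset \<gamma>" if "Nz \<le> n" for n
    using that
  proof (induction n rule: dec_induct)
    case base then show ?case using x0 .
  next
    case (step n)
    then show ?case using G_inv[OF g r, of "fst (x n)" "snd (x n)"] xs[of n] by simp
  qed
  define R where "R n = rr (x n)" for n
  have Rb: "0 \<le> R n \<and> R n < 1" if "Nz \<le> n" for n
    using memG_D[of "fst (x n)" "snd (x n)" \<gamma>] G[OF that] unfolding R_def rr_def by auto
  have Rs: "R (Suc n) = (if fst (x n) \<ge> 0 then \<rho> * R n else R n)" if "Nz \<le> n" for n
    using rr_step[OF g r, of "fst (x n)" "snd (x n)"] G[OF that] xs[of n] unfolding R_def by simp
  have Rm: "R (Suc n) \<le> R n" if "Nz \<le> n" for n
  proof -
    have "\<rho> * R n \<le> R n" using Rb[OF that] r by (simp add: mult_left_le_one_le)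
    then show ?thesis using Rs[OF that] by auto
  qed
  have Rm2: "R n \<le> R m" if "Nz \<le> m" "m \<le> n" for m n
    using that(2)
  proof (induction n rule: dec_induct)
    case base then show ?case by simp
  next
    case (step n)
    then show ?case using Rm[of n] that(1) by linarith
  qed
  have fstR: "fst (x n) = R n" if "fst (x n) \<ge> 0" for n
    using that unfolding R_def rr_def by simp
  have key: "(\<exists>N\<ge>Nz. \<forall>n\<ge>N. R n \<le> \<rho> ^ K) \<or> (\<exists>N. \<forall>n\<ge>N. fst (x n) < 0)" for K
  proof (induction K)
    case 0
    then show ?case using Rb by (intro disjI1 exI[of _ Nz]) (auto simp: less_imp_le)
  next
    case (Suc K)
    then show ?case
    proof
      assume "\<exists>N\<ge>Nz. \<forall>n\<ge>N. R n \<le> \<rho> ^ K"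
      then obtain N where N: "N \<ge> Nz" "\<forall>n\<ge>N. R n \<le> \<rho> ^ K" by auto
      show ?case
      proof (cases "\<exists>m\<ge>N. fst (x m) \<ge> 0")
        case True
        then obtain m where m: "m \<ge> N" "fst (x m) \<ge> 0" by auto
        have "R (Suc m) = \<rho> * R m" using Rs[of m] m N by auto
        also have "\<dots> \<le> \<rho> * \<rho> ^ K" using N m r by (simp add: mult_left_mono)
        finally have s: "R (Suc m) \<le> \<rho> ^ Suc K" by simp
        have "\<forall>n\<ge>Suc m. R n \<le> \<rho> ^ Suc K"
          using Rm2[of "Suc m"] s N m by (meson le_SucI order_trans)
        then show ?thesis using N m by (intro disjI1 exI[of _ "Suc m"]) auto
      next
        case False
        then show ?thesis by (intro disjI2 exI[of _ N]) auto
      qed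
    next
      assume "\<exists>N. \<forall>n\<ge>N. fst (x n) < 0"
      then show ?case by blast
    qed
  qed
  show ?thesis
  proof (intro allI impI)
    fix \<epsilon> :: real assume e: "\<epsilon> > 0"
    obtain K where K: "\<rho> ^ K < \<epsilon>" using real_arch_pow_inv[OF e r(2)] by blast
    from key[of K] show "\<exists>N. \<forall>n\<ge>N. fst (x n) \<ge> 0 \<longrightarrow> \<bar>fst (x n)\<bar> < \<epsilon>"
    proof
      assume "\<exists>N\<ge>Nz. \<forall>n\<ge>N. R n \<le> \<rho> ^ K"
      then obtain N where N: "N \<ge> Nz" "\<forall>n\<ge>N. R n \<le> \<rho> ^ K" by auto
      show ?thesis using N K fstR by (intro exI[of _ N]) force
    next
      assume "\<exists>N. \<forall>n\<ge>N. fst (x n) < 0"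
      then show ?thesis by force
    qed
  qed
qed

lemma EG_step: "(f ^^ N) (f x) \<in> A \<Longrightarrow> \<exists>N. (f ^^ N) x \<in> A"
  by (rule exI[of _ "Suc N"]) (simp add: funpow_Suc_right del: funpow.simps)

lemma entry:
  assumes g: "\<gamma> \<ge> 1" and r: "0 \<le> \<rho>" "\<rho> < 1" and S: "(u0, v0) \<in> Sset \<gamma>"
  shows "\<exists>N. (Mmap \<gamma> \<rho> ^^ N) (u0, v0) \<in> Gset \<gamma>"
proof (cases "(u0, v0) \<in> Gset \<gamma>")
  case True
  then show ?thesis by (intro exI[of _ 0]) simp
next
  case False
  have a: "-1 \<le> u0" "u0 < 0" "\<gamma> * u0 + v0 = 1/2"
    using S False unfolding Sset_def Splus_def Sminus_def Gset_def by auto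
  define a0 where "a0 = u0"
  have x1: "Mmap \<gamma> \<rho> (u0, v0) = (u0 - 1, u0 + v0 - 1)"
    using a Tp1[of \<gamma> u0 v0] by (simp add: Mmap_neg)
  have w1: "\<gamma> * (u0 - 1) + (u0 + v0 - 1) = u0 - \<gamma> - 1/2"
    using a by (simp add: algebra_simps)
  have x2: "Mmap \<gamma> \<rho> (u0 - 1, u0 + v0 - 1) = (u0, 2 * u0 + v0 - 1)"
    using a g w1 Tm1[of \<gamma> "u0 - 1" "u0 + v0 - 1"] by (simp add: Mmap_neg)
  have w2: "\<gamma> * u0 + (2 * u0 + v0 - 1) = 2 * u0 - 1/2"
    using a by (simp add: algebra_simps)
  have E2: "\<exists>N. (Mmap \<gamma> \<rho> ^^ N) (u0, 2 * u0 + v0 - 1) \<in> Gset \<gamma> \<Longrightarrow> ?thesis"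
    using EG_step x1 x2 by metis
  show ?thesis
  proof (cases "2 * u0 \<ge> -\<gamma>")
    case True
    have "(u0, 2 * u0 + v0 - 1) \<in> Gset \<gamma>" using memG[OF w2] a True by auto
    then show ?thesis using E2 by (metis funpow_0)
  next
    case False
    have x3: "Mmap \<gamma> \<rho> (u0, 2 * u0 + v0 - 1) = (u0 + 1, 3 * u0 + v0)"
      using a w2 Tm1[of \<gamma> "u0" "2 * u0 + v0 - 1"] by (simp add: Mmap_neg algebra_simps)
    define p where "p = u0 + 1"
    define t where "t = 3 * u0 + v0"
    have w3: "\<gamma> * p + t = 3 * p + \<gamma> - 5/2"
      using a unfolding p_def t_def by (simp add: algebra_simps)
    have E3: "\<exists>N. (Mmap \<gamma> \<rho> ^^ N) (p, t) \<in> Gset \<gamma> \<Longrightarrow> ?thesis"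
      using E2 EG_step x3 unfolding p_def t_def by metis
    have p: "0 \<le> p" "p < 1" using a unfolding p_def by auto
    show ?thesis
    proof (cases "3 * p + \<gamma> - 5/2 \<ge> -1/2")
      case True
      have "(p, t) \<in> Gset \<gamma>" using memG[OF w3] p True a unfolding p_def by auto
      then show ?thesis using E3 by (metis funpow_0)
    next
      case False
      have p3: "3 * p + \<gamma> < 2" using False by simp
      define X where "X = \<rho> * (3 * p + \<gamma> - 5/2)"
      have wX: "\<gamma> * (\<rho> * p) + \<rho> * t = X" unfolding X_def using w3
        by (metis distrib_left mult.left_commute)
      have M4: "Mmap \<gamma> \<rho> (p, t) = Tmap \<gamma> (\<rho> * p, \<rho> * t)" using p by (simp add: Mmap_pos)
      define q where "q = \<rho> * p"
      have q: "0 \<le> q" "q \<le> p" using p r unfolding q_def by (simp_all add: mult_left_le_one_le)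
      have Xle: "X \<le> 0" unfolding X_def using r False by (simp add: mult_nonneg_nonpos)
      have Xge: "X \<ge> \<rho> * (-3/2)" unfolding X_def using r p g by (intro mult_left_mono) auto
      show ?thesis
      proof (cases "X > -1/2")
        case True
        have "Mmap \<gamma> \<rho> (p, t) = (\<rho> * p, \<rho> * p + \<rho> * t)"
          "\<gamma> * (\<rho> * p) + (\<rho> * p + \<rho> * t) = X + \<rho> * p"
          using T0[of \<gamma> "\<rho> * p" "\<rho> * t"] M4 wX True Xle by auto
        moreover have "(\<rho> * p, \<rho> * p + \<rho> * t) \<in> Gset \<gamma>"
          apply (rule memG[OF calculation(2)]) using True Xle q p3 g unfolding q_def by auto
        ultimately show ?thesis using E3 EG_step by (metis funpow_0)
      next
        case False
        have x4: "Mmap \<gamma> \<rho> (p, t) = (q + 1, q + \<rho> * t + 1)"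
          using Tm1[of \<gamma> "\<rho> * p" "\<rho> * t"] M4 wX False unfolding q_def by auto
        define t4 where "t4 = q + \<rho> * t + 1"
        define W4 where "W4 = X + q + \<gamma> + 1"
        have w4: "\<gamma> * (q + 1) + t4 = W4" unfolding W4_def t4_def q_def using wX
          by (simp add: algebra_simps)
        have E4: "\<exists>N. (Mmap \<gamma> \<rho> ^^ N) (q + 1, t4) \<in> Gset \<gamma> \<Longrightarrow> ?thesis"
          using E3 EG_step x4 unfolding t4_def by metis
        have W4pos: "W4 > 0" unfolding W4_def using Xge r q g by linarith
        have M5: "Mmap \<gamma> \<rho> (q + 1, t4) = Tmap \<gamma> (\<rho> * (q+1), \<rho> * t4)" using q by (simp add: Mmap_pos)
        define Y where "Y = \<rho> * W4"
        define Z where "Z = \<rho> * q"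
        have wY: "\<gamma> * (\<rho> * (q+1)) + \<rho> * t4 = Y" unfolding Y_def using w4
          by (metis distrib_left mult.left_commute)
        have Ypos: "Y \<ge> 0" unfolding Y_def using W4pos r by simp
        have u5: "\<rho> * (q + 1) = Z + \<rho>" unfolding Z_def by (simp add: algebra_simps)
        have XA: "X = 3 * q + \<rho> * \<gamma> - 5/2 * \<rho>" unfolding X_def q_def by (simp add: algebra_simps)
        have YA: "Y = 4 * Z + \<rho> * (\<rho> * \<gamma>) - 5/2 * (\<rho> * \<rho>) + \<rho> * \<gamma> + \<rho>"
          unfolding Y_def W4_def XA Z_def by (simp add: algebra_simps)
        have f2: "\<rho> * \<gamma> \<ge> \<rho>" using mult_left_mono[OF g r(1)] by simp
        have f1: "\<rho> * (\<rho> * \<gamma>) \<ge> \<rho> * \<rho>" using mult_left_mono[OF f2] r by simp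
        have f3: "\<rho> * \<rho> \<le> \<rho>" using r by (simp add: mult_left_le_one_le)
        have f4: "\<rho> * \<gamma> \<le> \<gamma>" using r g by (simp add: mult_left_le_one_le)
        have f5: "\<gamma> - \<rho> * \<gamma> \<ge> 1 - \<rho>"
        proof -
          have "(\<gamma> - 1) * (1 - \<rho>) \<ge> 0" using r g by simp
          then show ?thesis by (simp add: algebra_simps)
        qed
        have f6: "Z \<le> q" "0 \<le> Z" unfolding Z_def using r q by (simp_all add: mult_left_le_one_le)
        have f7: "Z \<le> \<rho> * \<rho>" unfolding Z_def q_def using r p
          by (metis mult.assoc mult_left_le mult_nonneg_nonneg mult.commute less_imp_le)
        have f8: "Y \<le> Z + \<rho> * \<gamma> + \<rho> / 2"
        proof -
          have "W4 \<le> q + \<gamma> + 1/2" unfolding W4_def using False by linarith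
          then have "\<rho> * W4 \<le> \<rho> * (q + \<gamma> + 1/2)" using r by (simp add: mult_left_mono)
          then show ?thesis unfolding Y_def Z_def by (simp add: algebra_simps)
        qed
        show ?thesis
        proof (cases "Y < 1/2")
          case True
          have x5: "Mmap \<gamma> \<rho> (q + 1, t4) = (\<rho> * (q+1), \<rho> * (q+1) + \<rho> * t4)"
            "\<gamma> * (\<rho> * (q+1)) + (\<rho> * (q+1) + \<rho> * t4) = Y + (Z + \<rho>)"
            using T0[of \<gamma> "\<rho> * (q+1)" "\<rho> * t4"] M5 wY True Ypos u5 by auto
          have Zl: "Z + \<rho> < 1" using True YA f1 f2 f3 r by linarith
          have "(\<rho> * (q+1), \<rho> * (q+1) + \<rho> * t4) \<in> Gset \<gamma>"
            apply (rule memG[OF x5(2)]) using True Ypos Zl f6 r g u5 by auto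
          then show ?thesis using E4 EG_step x5(1) by (metis funpow_0)
        next
          case False
          have x5: "Mmap \<gamma> \<rho> (q + 1, t4) = (\<rho> * (q+1) - 1, \<rho> * (q+1) + \<rho> * t4 - 1)"
            "\<gamma> * (\<rho> * (q+1) - 1) + (\<rho> * (q+1) + \<rho> * t4 - 1) = Y + (Z + \<rho>) - \<gamma> - 1"
            using Tp1[of \<gamma> "\<rho> * (q+1)" "\<rho> * t4"] M5 wY False u5 by auto
          have "(\<rho> * (q+1) - 1, \<rho> * (q+1) + \<rho> * t4 - 1) \<in> Gset \<gamma>"
          proof (rule memG[OF x5(2)])
            show "0 \<le> \<rho> * (q + 1) - 1 \<and> \<rho> * (q + 1) - 1 < 1 \<and> - 1 / 2 \<le> Y + (Z + \<rho>) - \<gamma> - 1 \<and> Y + (Z + \<rho>) - \<gamma> - 1 \<le> 1 / 2 + \<gamma> \<or>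
    - 1 \<le> \<rho> * (q + 1) - 1 \<and> \<rho> * (q + 1) - 1 < 0 \<and> - (1 / 2 + \<gamma>) \<le> Y + (Z + \<rho>) - \<gamma> - 1 \<and> Y + (Z + \<rho>) - \<gamma> - 1 < 1 / 2"
            proof (cases "Z + \<rho> < 1")
              case True
              then show ?thesis using False u5 f5 f8 f6 r g by auto
            next
              case ge: False
              have h: "(\<gamma> - 1) * (\<rho> * \<rho> + \<rho> - 1) \<ge> 0" using g ge f7 by simp
              have h2: "\<rho> * (\<rho> * \<gamma>) + \<rho> * \<gamma> - \<gamma> \<ge> \<rho> * \<rho> + \<rho> - 1"
                using h by (simp add: algebra_simps)
              have c1: "0 \<le> \<rho> * (q + 1) - 1" "\<rho> * (q + 1) - 1 < 1" using ge u5 f6 q p3 g r by linarith+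
              have c2: "- 1 / 2 \<le> Y + (Z + \<rho>) - \<gamma> - 1" using ge YA h2 f3 r by linarith
              have c3: "Y + (Z + \<rho>) - \<gamma> - 1 \<le> 1 / 2 + \<gamma>" using f8 f4 f6 q p3 g r by linarith
              show ?thesis using c1 c2 c3 by blast
            qed
          qed
          then show ?thesis using E4 EG_step x5(1) by (metis funpow_0)
        qed
      qed
    qed
  qed
qed

theorem lemma1:
  fixes \<gamma> \<rho> u0 v0 :: real
  assumes "\<gamma> \<ge> 1" and "0 \<le> \<rho>" and "\<rho> < 1"
    and "(u0, v0) \<in> Sset \<gamma>"
  shows "\<forall>\<epsilon>>0. \<exists>N. \<forall>n\<ge>N.
           fst ((Mmap \<gamma> \<rho> ^^ n) (u0, v0)) \<ge> 0 \<longrightarrow>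
           \<bar>fst ((Mmap \<gamma> \<rho> ^^ n) (u0, v0))\<bar> < \<epsilon>"
proof -
  obtain Nz where Nz: "(Mmap \<gamma> \<rho> ^^ Nz) (u0, v0) \<in> Gset \<gamma>"
    using entry[OF assms] by blast
  show ?thesis
    by (rule conv_from_G[OF assms(1,2,3), where x = "\<lambda>n. (Mmap \<gamma> \<rho> ^^ n) (u0, v0)" and Nz = Nz])
       (simp_all add: Nz)
qed

end
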